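(* Let $m,n\in\mathbb{N}$ and let $H_{m,n}=\langle x^m,y^n\rangle\le F$, where $x=x_0$ and $y=x_0^2x_1$. Then there is an element $h\in H_{m,n}$ and a dyadic fraction $\alpha\in(0,1)$ such that $h(\alpha)=\alpha$, $h'(\alpha^-)=1$ and $h'(\alpha^+)=2$.
   Context: Thompson's group $F$ is the group of piecewise linear homeomorphisms of $[0,1]$ with finitely many dyadic breakpoints and slopes integer powers of $2$; composition is from left to right. Writing numbers in $(0,1)$ as $.s$ with $s$ an infinite binary word, $x_0$ maps $.00\alpha\mapsto .0\alpha$, $.01\alpha\mapsto .10\alpha$, $.1\alpha\mapsto .11\alpha$, and $x_1$ maps $.0\alpha\mapsto .0\alpha$, $.100\alpha\mapsto .10\alpha$, $.101\alpha\mapsto .110\alpha$, $.11\alpha\mapsto .111\alpha$. Here $h'(\alpha^-)$ and $h'(\alpha^+)$ denote the left and right derivatives of $h$ at $\alpha$. *)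

theory Defs
  imports Complex_Main
begin

text \<open>Generators of Thompson's group F as maps of the reals; they act as stated
on [0,1] and are extended by the identity outside [0,1] (irrelevant to the statement).\<close>

definition x0 :: "real \<Rightarrow> real" where
  "x0 t = (if t < 0 \<or> t > 1 then t
           else if t \<le> 1/4 then 2 * t
           else if t \<le> 1/2 then t + 1/4
           else t / 2 + 1/2)"

definition x0inv :: "real \<Rightarrow> real" where
  "x0inv t = (if t < 0 \<or> t > 1 then t
           else if t \<le> 1/2 then t / 2
           else if t \<le> 3/4 then t - 1/4
           else 2 * t - 1)"

definition x1 :: "real \<Rightarrow> real" where
  "x1 t = (if t < 0 \<or> t > 1 then t
           else if t \<le> 1/2 then t
           else if t \<le> 5/8 then 2 * t - 1/2
           else if t \<le> 3/4 then t + 1/8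
           else t / 2 + 1/2)"

definition x1inv :: "real \<Rightarrow> real" where
  "x1inv t = (if t < 0 \<or> t > 1 then t
           else if t \<le> 1/2 then t
           else if t \<le> 3/4 then t / 2 + 1/4
           else if t \<le> 7/8 then t - 1/8
           else 2 * t - 1)"

text \<open>Composition is left to right: the product g h means "first g, then h",
i.e. the function h \<circ> g. Thus y = x0^2 x1 is x1 \<circ> x0 \<circ> x0.\<close>

definition ygen :: "real \<Rightarrow> real" where
  "ygen = x1 \<circ> x0 \<circ> x0"

definition ygen_inv :: "real \<Rightarrow> real" where
  "ygen_inv = x0inv \<circ> x0inv \<circ> x1inv"

inductive_set H :: "nat \<Rightarrow> nat \<Rightarrow> (real \<Rightarrow> real) set" for m n where
  H_id: "id \<in> H m n"
| H_x: "h \<in> H m n \<Longrightarrow> (x0 ^^ m) \<circ> h \<in> H m n"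
| H_xinv: "h \<in> H m n \<Longrightarrow> (x0inv ^^ m) \<circ> h \<in> H m n"
| H_y: "h \<in> H m n \<Longrightarrow> (ygen ^^ n) \<circ> h \<in> H m n"
| H_yinv: "h \<in> H m n \<Longrightarrow> (ygen_inv ^^ n) \<circ> h \<in> H m n"

definition dyadic :: "real \<Rightarrow> bool" where
  "dyadic a \<longleftrightarrow> (\<exists>(k::int) (j::nat). a = of_int k / 2 ^ j)"

end

theory Submission
  imports Defs
begin

lemma H_xinv_pow: "g \<in> H m n \<Longrightarrow> ((x0inv ^^ m) ^^ k) \<circ> g \<in> H m n"
proof (induction k)
  case 0 then show ?case by simp
next
  case (Suc k)
  then have "(x0inv ^^ m) \<circ> (((x0inv ^^ m) ^^ k) \<circ> g) \<in> H m n" using Suc.IH by (intro H_xinv) blast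
  then show ?case by (simp only: funpow.simps(2) comp_assoc)
qed

lemma H_y_pow: "g \<in> H m n \<Longrightarrow> ((ygen ^^ n) ^^ k) \<circ> g \<in> H m n"
proof (induction k)
  case 0 then show ?case by simp
next
  case (Suc k)
  then have "(ygen ^^ n) \<circ> (((ygen ^^ n) ^^ k) \<circ> g) \<in> H m n" using Suc.IH by (intro H_y) blast
  then show ?case by (simp only: funpow.simps(2) comp_assoc)
qed

lemma ygen_lin: "0 \<le> s \<Longrightarrow> s \<le> 3/16 \<Longrightarrow> ygen s = 4 * s"
  by (simp add: ygen_def x0_def x1_def)

lemma ygen_pow: "0 \<le> t \<Longrightarrow> 4 ^ k * t \<le> 3/4 \<Longrightarrow> (ygen ^^ k) t = 4 ^ k * t"
proof (induction k arbitrary: t)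
  case 0 then show ?case by simp
next
  case (Suc k)
  have "t \<le> 3/16"
  proof -
    have "(1::real) \<le> 4 ^ k" by simp
    then have "1 * (4 * t) \<le> 4 ^ k * (4 * t)" using Suc.prems(1) by (intro mult_right_mono) auto
    then have "4 * t \<le> 4 ^ k * (4 * t)" by simp
    then show ?thesis using Suc.prems(2) by (simp add: mult.assoc mult.commute)
  qed
  then have "ygen t = 4 * t" using Suc.prems(1) by (simp add: ygen_lin)
  moreover have "(ygen ^^ k) (4 * t) = 4 ^ k * (4 * t)"
    using Suc.prems by (intro Suc.IH) (auto simp: mult.assoc mult.commute)
  moreover have "(ygen ^^ Suc k) t = (ygen ^^ k) (ygen t)" by (simp only: funpow_Suc_right comp_def)
  ultimately show ?case by (simp add: mult.assoc mult.commute)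
qed

lemma x0inv_pow: "0 \<le> s \<Longrightarrow> s \<le> 1/2 \<Longrightarrow> (x0inv ^^ k) s = s / 2 ^ k"
proof (induction k arbitrary: s)
  case 0 then show ?case by simp
next
  case (Suc k)
  have e1: "x0inv s = s / 2" using Suc.prems by (simp add: x0inv_def)
  have e2: "(x0inv ^^ k) (s/2) = (s/2) / 2 ^ k" using Suc.prems by (intro Suc.IH) auto
  have "(x0inv ^^ Suc k) s = (x0inv ^^ k) (x0inv s)" by (simp only: funpow_Suc_right comp_def)
  also have "\<dots> = (s/2) / 2 ^ k" by (simp only: e1 e2)
  also have "\<dots> = s / 2 ^ Suc k" by simp
  finally show ?case .
qed

lemma x0inv_pow2: "1/2 \<le> s \<Longrightarrow> s \<le> 3/4 \<Longrightarrow> (x0inv ^^ Suc k) s = (s - 1/4) / 2 ^ k"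
proof -
  assume a: "1/2 \<le> s" "s \<le> 3/4"
  have e1: "x0inv s = s - 1/4" using a by (simp add: x0inv_def)
  have e2: "(x0inv ^^ k) (s - 1/4) = (s - 1/4) / 2 ^ k" using a by (intro x0inv_pow) auto
  have "(x0inv ^^ Suc k) s = (x0inv ^^ k) (x0inv s)" by (simp only: funpow_Suc_right comp_def)
  also have "\<dots> = (s - 1/4) / 2 ^ k" by (simp only: e1 e2)
  finally show ?thesis .
qed

theorem lemma3p2:
  fixes m n :: nat
  assumes "m \<ge> 1" and "n \<ge> 1"
  shows "\<exists>h \<in> H m n. \<exists>\<alpha>. dyadic \<alpha> \<and> 0 < \<alpha> \<and> \<alpha> < 1 \<and> h \<alpha> = \<alpha> \<and>
           (h has_real_derivative 1) (at \<alpha> within {..\<alpha>}) \<and>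
           (h has_real_derivative 2) (at \<alpha> within {\<alpha>..})"
proof -
  define K where "K = n * m"
  define N where "N = m * (2 * n)"
  have NK: "N = 2 * K" unfolding N_def K_def by simp
  have N2: "N \<ge> 2"
  proof -
    have "1 * (2 * 1) \<le> m * (2 * n)" using assms by (intro mult_le_mono) auto
    then show ?thesis unfolding N_def by simp
  qed
  have p4: "(4::real) ^ K = 2 ^ N" unfolding NK by (simp add: power_mult)
  define h where "h = (x0inv ^^ N) \<circ> (ygen ^^ K)"
  define a :: real where "a = 1 / 2 ^ (N + 1)"
  have hH: "h \<in> H m n"
  proof -
    have "((ygen ^^ n) ^^ m) \<circ> id \<in> H m n" by (intro H_y_pow H_id)
    then have "((x0inv ^^ m) ^^ (2*n)) \<circ> (((ygen ^^ n) ^^ m) \<circ> id) \<in> H m n" by (rule H_xinv_pow)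
    then show ?thesis unfolding h_def N_def K_def by (simp add: funpow_mult)
  qed
  have apos: "0 < a" unfolding a_def by simp
  have a2: "2 ^ N * a = 1/2" unfolding a_def by simp
  have left: "h t = t" if "0 \<le> t" "t \<le> a" for t
  proof -
    have le: "2 ^ N * t \<le> 1/2" using mult_left_mono[OF that(2), of "2 ^ N"] a2 by simp
    have "(ygen ^^ K) t = 2 ^ N * t" using ygen_pow[of t K] that le p4 by simp
    moreover have "(x0inv ^^ N) (2 ^ N * t) = t" using x0inv_pow[of "2 ^ N * t" N] le that by simp
    ultimately show ?thesis unfolding h_def by simp
  qed
  have right: "h t = 2 * t - a" if "a \<le> t" "t \<le> 3/2 * a" for t
  proof -
    have le1: "1/2 \<le> 2 ^ N * t" using mult_left_mono[OF that(1), of "2 ^ N"] a2 by simp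
    have "2 ^ N * t \<le> 2 ^ N * (3/2 * a)" using that by simp
    also have "\<dots> = 3/2 * (2 ^ N * a)" by (simp only: mult_ac)
    also have "\<dots> = 3/4" using a2 by (simp add: mult_ac)
    finally have le2: "2 ^ N * t \<le> 3/4" .
    have "(ygen ^^ K) t = 2 ^ N * t" using ygen_pow[of t K] that le2 p4 apos by simp
    moreover have "(x0inv ^^ N) (2 ^ N * t) = (2 ^ N * t - 1/4) / 2 ^ (N - 1)"
      using x0inv_pow2[of "2 ^ N * t" "N - 1"] le1 le2 N2 by (simp add: Suc_diff_1)
    moreover have "(2 ^ N * t - 1/4) / 2 ^ (N - 1) = 2 * t - (a::real)"
    proof -
      define j where "j = N - 1"
      have Nj: "N = Suc j" using N2 unfolding j_def by simp
      have e: "(2::real) ^ N = 2 * 2 ^ (N - 1)" by (simp add: Nj)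
      have "a = 1 / (4 * 2 ^ (N-1))" unfolding a_def using e by simp
      then show ?thesis using e by (simp add: field_simps)
    qed
    ultimately show ?thesis unfolding h_def by simp
  qed
  have d1: "(h has_real_derivative 1) (at a within {..a})"
  proof (rule has_field_derivative_transform_within[where f = "\<lambda>t. t" and d = a])
    show "((\<lambda>t. t) has_real_derivative 1) (at a within {..a})" by (rule DERIV_ident)
    show "0 < a" by (rule apos)
    show "a \<in> {..a}" by simp
    fix x assume "x \<in> {..a}" "dist x a < a"
    then show "x = h x" using left[of x] by (auto simp: dist_real_def)
  qed
  have d2: "(h has_real_derivative 2) (at a within {a..})"
  proof (rule has_field_derivative_transform_within[where f = "\<lambda>t. 2 * t - a" and d = "a/2"])
    show "((\<lambda>t. 2 * t - a) has_real_derivative 2) (at a within {a..})"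
      by (auto intro!: derivative_eq_intros)
    show "0 < a/2" using apos by simp
    show "a \<in> {a..}" by simp
    fix x assume "x \<in> {a..}" "dist x a < a/2"
    then show "2 * x - a = h x" using right[of x] by (auto simp: dist_real_def)
  qed
  have dy: "dyadic a" unfolding dyadic_def a_def by (rule exI[of _ 1], rule exI[of _ "N+1"]) simp
  have a1: "a < 1"
  proof -
    have "(1::real) < 2 * 2 ^ N" using one_le_power[of "2::real" N] by linarith
    then show ?thesis unfolding a_def by simp
  qed
  have "h a = a" using left apos by simp
  then show ?thesis using hH dy apos a1 d1 d2 by blast
qed

end
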